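(* For every two hereditary class properties $\Pi_1$ and $\Pi_2$, \[(\Pi_1\cap\Pi_2)^+=\Pi_1^+\cap\Pi_2^+\qquad\text{and}\qquad(\Pi_1\cap\Pi_2)^\ast=\Pi_1^\ast\cap\Pi_2^\ast.\] In particular, for hereditary class properties $\Pi,\Lambda_1,\Lambda_2$: $\Pi=\Lambda_1^+=\Lambda_2^+$ implies $\Pi=(\Lambda_1\cap\Lambda_2)^+$, and $\Pi=\Lambda_1^\ast=\Lambda_2^\ast$ implies $\Pi=(\Lambda_1\cap\Lambda_2)^\ast$.
   Context: Graphs are finite and simple. A hereditary class is a class closed under isomorphism and induced subgraphs; a hereditary class property is a set $\Pi$ of hereditary classes such that $\mathscr C\in\Pi$, $\mathscr D$ hereditary, $\mathscr D\subseteq\mathscr C$ imply $\mathscr D\in\Pi$. For non-decreasing $f$ and positive integer $p$, $\mathscr C$ has an $f$-bounded $\Pi$-decomposition with parameter $p$ if there is $\mathscr D_p\in\Pi$ such that every $G\in\mathscr C$ has a partition $V_1,\dots,V_N$ of $V(G)$ with $N\le f(|G|)$ and $G[V_{i_1}\cup\dots\cup V_{i_p}]\in\mathscr D_p$ for all $i_1,\dots,i_p\in[N]$. $\Pi^+$ (resp. $\Pi^\ast$) is the set of hereditary classes that, for every positive integer $p$, have an $f$-bounded $\Pi$-decomposition with parameter $p$ for some constant function $f$ (resp. some non-decreasing $f$ with $f(n)=n^{o(1)}$). *)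

theory Defs
  imports Complex_Main
begin

text \<open>Finite simple graphs with vertices drawn from nat (every finite graph is
isomorphic to such a graph). A graph is a pair (V, E) with V finite and every
edge a 2-element subset of V.\<close>

type_synonym graph = "nat set \<times> nat set set"

definition is_graph :: "graph \<Rightarrow> bool" where
  "is_graph G \<longleftrightarrow> finite (fst G) \<and> (\<forall>e\<in>snd G. card e = 2 \<and> e \<subseteq> fst G)"

definition gsize :: "graph \<Rightarrow> nat" where
  "gsize G = card (fst G)"

definition induced :: "graph \<Rightarrow> nat set \<Rightarrow> graph" where
  "induced G S = (S \<inter> fst G, {e \<in> snd G. e \<subseteq> S})"

definition graph_iso :: "graph \<Rightarrow> graph \<Rightarrow> bool" where
  "graph_iso G H \<longleftrightarrow> (\<exists>h. bij_betw h (fst G) (fst H) \<and>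
     (\<forall>u\<in>fst G. \<forall>v\<in>fst G. {u, v} \<in> snd G \<longleftrightarrow> {h u, h v} \<in> snd H))"

definition hereditary :: "graph set \<Rightarrow> bool" where
  "hereditary C \<longleftrightarrow> C \<subseteq> {G. is_graph G}
     \<and> (\<forall>G\<in>C. \<forall>H. is_graph H \<and> graph_iso G H \<longrightarrow> H \<in> C)
     \<and> (\<forall>G\<in>C. \<forall>S. S \<subseteq> fst G \<longrightarrow> induced G S \<in> C)"

definition hered_property :: "graph set set \<Rightarrow> bool" where
  "hered_property \<Pi> \<longleftrightarrow> (\<forall>C\<in>\<Pi>. hereditary C)
     \<and> (\<forall>C\<in>\<Pi>. \<forall>D. hereditary D \<and> D \<subseteq> C \<longrightarrow> D \<in> \<Pi>)"

definition good_partition :: "(nat \<Rightarrow> real) \<Rightarrow> nat \<Rightarrow> graph set \<Rightarrow> graph \<Rightarrow> bool" where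
  "good_partition f p D G \<longleftrightarrow> (\<exists>N::nat. \<exists>P::nat \<Rightarrow> nat set.
     real N \<le> f (gsize G)
     \<and> (\<Union>i<N. P i) = fst G
     \<and> (\<forall>i<N. \<forall>j<N. i \<noteq> j \<longrightarrow> P i \<inter> P j = {})
     \<and> (\<forall>idx::nat \<Rightarrow> nat. (\<forall>j<p. idx j < N) \<longrightarrow> induced G (\<Union>j<p. P (idx j)) \<in> D))"

definition has_decomp :: "graph set set \<Rightarrow> (nat \<Rightarrow> real) \<Rightarrow> nat \<Rightarrow> graph set \<Rightarrow> bool" where
  "has_decomp \<Pi> f p C \<longleftrightarrow> (\<exists>D\<in>\<Pi>. \<forall>G\<in>C. good_partition f p D G)"

text \<open>f(n) = n^{o(1)}: f(n) = n^{g(n)} for all large n, with g(n) \<rightarrow> 0.\<close>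
definition subpoly :: "(nat \<Rightarrow> real) \<Rightarrow> bool" where
  "subpoly f \<longleftrightarrow> (\<exists>g::nat \<Rightarrow> real. g \<longlonglongrightarrow> 0 \<and>
     (\<forall>\<^sub>F n in sequentially. f n = real n powr g n))"

definition plus_closure :: "graph set set \<Rightarrow> graph set set" where
  "plus_closure \<Pi> = {C. hereditary C \<and>
     (\<forall>p::nat. p > 0 \<longrightarrow> (\<exists>c::real. has_decomp \<Pi> (\<lambda>_. c) p C))}"

definition star_closure :: "graph set set \<Rightarrow> graph set set" where
  "star_closure \<Pi> = {C. hereditary C \<and>
     (\<forall>p::nat. p > 0 \<longrightarrow> (\<exists>f. mono f \<and> subpoly f \<and> has_decomp \<Pi> f p C))}"

end

theory Submission
  imports Defs
begin

lemma induced_sub: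
  assumes "hereditary D" "induced G S \<in> D" "S' \<subseteq> S" "S' \<subseteq> fst G"
  shows "induced G S' \<in> D"
proof -
  have "induced (induced G S) S' \<in> D"
    using assms unfolding hereditary_def by (auto simp: induced_def)
  moreover have "induced (induced G S) S' = induced G S'"
    using assms(3) by (auto simp: induced_def)
  ultimately show ?thesis by simp
qed

lemma idx_bound:
  fixes i j N1 N2 :: nat
  assumes "i < N1" "j < N2"
  shows "i * N2 + j < N1 * N2"
proof -
  have "i * N2 + j < (i+1) * N2" using assms by simp
  also have "\<dots> \<le> N1 * N2" using assms by (intro mult_right_mono) auto
  finally show ?thesis .
qed

lemma refine:
  assumes gp1: "good_partition f1 p D1 G" and gp2: "good_partition f2 p D2 G"
    and h1: "hereditary D1" and h2: "hereditary D2"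
  shows "good_partition (\<lambda>n. max 0 (f1 n) * max 0 (f2 n)) p (D1 \<inter> D2) G"
proof -
  obtain N1 P1 where a1: "real N1 \<le> f1 (gsize G)" and b1: "(\<Union>i<N1. P1 i) = fst G"
    and c1: "\<forall>i<N1. \<forall>j<N1. i \<noteq> j \<longrightarrow> P1 i \<inter> P1 j = {}"
    and d1: "\<forall>idx::nat \<Rightarrow> nat. (\<forall>j<p. idx j < N1) \<longrightarrow> induced G (\<Union>j<p. P1 (idx j)) \<in> D1"
    using gp1 unfolding good_partition_def by blast
  obtain N2 P2 where a2: "real N2 \<le> f2 (gsize G)" and b2: "(\<Union>i<N2. P2 i) = fst G"
    and c2: "\<forall>i<N2. \<forall>j<N2. i \<noteq> j \<longrightarrow> P2 i \<inter> P2 j = {}"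
    and d2: "\<forall>idx::nat \<Rightarrow> nat. (\<forall>j<p. idx j < N2) \<longrightarrow> induced G (\<Union>j<p. P2 (idx j)) \<in> D2"
    using gp2 unfolding good_partition_def by blast
  define Q where "Q k = P1 (k div N2) \<inter> P2 (k mod N2)" for k
  have A: "real (N1 * N2) \<le> max 0 (f1 (gsize G)) * max 0 (f2 (gsize G))"
  proof -
    have "real (N1 * N2) = real N1 * real N2" by simp
    also have "\<dots> \<le> max 0 (f1 (gsize G)) * max 0 (f2 (gsize G))"
      using a1 a2 by (intro mult_mono) auto
    finally show ?thesis .
  qed
  have B: "(\<Union>k<N1*N2. Q k) = fst G"
  proof
    show "(\<Union>k<N1*N2. Q k) \<subseteq> fst G"
    proof
      fix x assume "x \<in> (\<Union>k<N1*N2. Q k)"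
      then obtain k where "k < N1*N2" "x \<in> Q k" by blast
      then have "k div N2 < N1" "x \<in> P1 (k div N2)"
        by (auto simp: Q_def less_mult_imp_div_less)
      then show "x \<in> fst G" using b1 by blast
    qed
  next
    show "fst G \<subseteq> (\<Union>k<N1*N2. Q k)"
    proof
      fix x assume x: "x \<in> fst G"
      then obtain i where i: "i < N1" "x \<in> P1 i" using b1 by blast
      obtain j where j: "j < N2" "x \<in> P2 j" using b2 x by blast
      have "(i*N2+j) div N2 = i" "(i*N2+j) mod N2 = j" using j by auto
      then have "x \<in> Q (i*N2+j)" using i j by (simp add: Q_def)
      moreover have "i*N2+j < N1*N2" using idx_bound i j by blast
      ultimately show "x \<in> (\<Union>k<N1*N2. Q k)" by blast
    qed
  qed
  have C: "\<forall>i<N1*N2. \<forall>j<N1*N2. i \<noteq> j \<longrightarrow> Q i \<inter> Q j = {}"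
  proof (intro allI impI)
    fix i j assume i: "i < N1*N2" and j: "j < N1*N2" and ij: "i \<noteq> j"
    have N2: "N2 > 0" using i by (cases N2) auto
    have "i div N2 \<noteq> j div N2 \<or> i mod N2 \<noteq> j mod N2"
      using ij by (metis div_mod_decomp)
    moreover have "i div N2 < N1" "j div N2 < N1" using i j by (auto simp: less_mult_imp_div_less)
    moreover have "i mod N2 < N2" "j mod N2 < N2" using N2 by auto
    ultimately show "Q i \<inter> Q j = {}" using c1 c2 unfolding Q_def by blast
  qed
  have D: "\<forall>idx::nat \<Rightarrow> nat. (\<forall>j<p. idx j < N1*N2) \<longrightarrow> induced G (\<Union>j<p. Q (idx j)) \<in> D1 \<inter> D2"
  proof (intro allI impI)
    fix idx :: "nat \<Rightarrow> nat" assume H: "\<forall>j<p. idx j < N1*N2"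
    have N2: "p > 0 \<Longrightarrow> N2 > 0" using H by (cases N2) auto
    have e1: "\<forall>j<p. (\<lambda>j. idx j div N2) j < N1" using H by (auto simp: less_mult_imp_div_less)
    have e2: "\<forall>j<p. (\<lambda>j. idx j mod N2) j < N2" using N2 by auto
    have s1: "(\<Union>j<p. Q (idx j)) \<subseteq> (\<Union>j<p. P1 (idx j div N2))" by (auto simp: Q_def)
    have s2: "(\<Union>j<p. Q (idx j)) \<subseteq> (\<Union>j<p. P2 (idx j mod N2))" by (auto simp: Q_def)
    have sG: "(\<Union>j<p. Q (idx j)) \<subseteq> fst G"
    proof (rule UN_least)
      fix j assume "j \<in> {..<p}"
      then have "idx j < N1*N2" using H by simp
      then have "Q (idx j) \<subseteq> (\<Union>k<N1*N2. Q k)" by blast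
      then show "Q (idx j) \<subseteq> fst G" using B by simp
    qed
    have "induced G (\<Union>j<p. P1 (idx j div N2)) \<in> D1"
      using spec[OF d1, of "\<lambda>j. idx j div N2"] e1 by simp
    then have X1: "induced G (\<Union>j<p. Q (idx j)) \<in> D1" by (rule induced_sub[OF h1 _ s1 sG])
    have "induced G (\<Union>j<p. P2 (idx j mod N2)) \<in> D2"
      using spec[OF d2, of "\<lambda>j. idx j mod N2"] e2 by simp
    then have X2: "induced G (\<Union>j<p. Q (idx j)) \<in> D2" by (rule induced_sub[OF h2 _ s2 sG])
    from X1 X2
    show "induced G (\<Union>j<p. Q (idx j)) \<in> D1 \<inter> D2" by blast
  qed
  show ?thesis unfolding good_partition_def
    apply (rule exI[of _ "N1*N2"], rule exI[of _ Q])
    using A B C D by simp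
qed

lemma hered_inter:
  assumes h1: "hereditary D1" and h2: "hereditary D2"
  shows "hereditary (D1 \<inter> D2)"
proof -
  have a: "D1 \<inter> D2 \<subseteq> {G. is_graph G}" using h1 unfolding hereditary_def by blast
  have b: "\<forall>G\<in>D1 \<inter> D2. \<forall>H. is_graph H \<and> graph_iso G H \<longrightarrow> H \<in> D1 \<inter> D2"
  proof (intro ballI allI impI)
    fix G H assume "G \<in> D1 \<inter> D2" "is_graph H \<and> graph_iso G H"
    then show "H \<in> D1 \<inter> D2" using h1 h2 unfolding hereditary_def by (meson IntD1 IntD2 IntI)
  qed
  have c: "\<forall>G\<in>D1 \<inter> D2. \<forall>S. S \<subseteq> fst G \<longrightarrow> induced G S \<in> D1 \<inter> D2"
  proof (intro ballI allI impI)
    fix G S assume "G \<in> D1 \<inter> D2" "S \<subseteq> fst G"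
    then show "induced G S \<in> D1 \<inter> D2" using h1 h2 unfolding hereditary_def by (meson IntD1 IntD2 IntI)
  qed
  show ?thesis unfolding hereditary_def using a b c by (intro conjI)
qed

lemma inter_in:
  assumes p1: "hered_property P1" and p2: "hered_property P2" and d1: "D1 \<in> P1" and d2: "D2 \<in> P2"
  shows "D1 \<inter> D2 \<in> P1 \<inter> P2" "hereditary D1" "hereditary D2"
proof -
  have A1: "\<forall>C\<in>P1. hereditary C" "\<forall>C\<in>P1. \<forall>D. hereditary D \<and> D \<subseteq> C \<longrightarrow> D \<in> P1"
    using p1 unfolding hered_property_def by (rule conjunct1, rule conjunct2)
  have A2: "\<forall>C\<in>P2. hereditary C" "\<forall>C\<in>P2. \<forall>D. hereditary D \<and> D \<subseteq> C \<longrightarrow> D \<in> P2"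
    using p2 unfolding hered_property_def by (rule conjunct1, rule conjunct2)
  show h1: "hereditary D1" using bspec[OF A1(1) d1] .
  show h2: "hereditary D2" using bspec[OF A2(1) d2] .
  have h: "hereditary (D1 \<inter> D2)" by (rule hered_inter[OF h1 h2])
  have "D1 \<inter> D2 \<in> P1" using spec[OF bspec[OF A1(2) d1], of "D1 \<inter> D2"] h by (simp add: Int_lower1)
  moreover have "D1 \<inter> D2 \<in> P2" using spec[OF bspec[OF A2(2) d2], of "D1 \<inter> D2"] h by (simp add: Int_lower2)
  ultimately show "D1 \<inter> D2 \<in> P1 \<inter> P2" by (rule IntI)
qed

lemma decomp_inter:
  assumes "hered_property P1" "hered_property P2"
    "has_decomp P1 f1 p C" "has_decomp P2 f2 p C"
  shows "has_decomp (P1 \<inter> P2) (\<lambda>n. max 0 (f1 n) * max 0 (f2 n)) p C"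
proof -
  obtain D1 where D1: "D1 \<in> P1" "\<forall>G\<in>C. good_partition f1 p D1 G"
    using assms(3) unfolding has_decomp_def by blast
  obtain D2 where D2: "D2 \<in> P2" "\<forall>G\<in>C. good_partition f2 p D2 G"
    using assms(4) unfolding has_decomp_def by blast
  note I = inter_in[OF assms(1,2) D1(1) D2(1)]
  have "\<forall>G\<in>C. good_partition (\<lambda>n. max 0 (f1 n) * max 0 (f2 n)) p (D1 \<inter> D2) G"
  proof
    fix G assume G: "G \<in> C"
    show "good_partition (\<lambda>n. max 0 (f1 n) * max 0 (f2 n)) p (D1 \<inter> D2) G"
      by (rule refine[OF bspec[OF D1(2) G] bspec[OF D2(2) G] I(2) I(3)])
  qed
  then show ?thesis unfolding has_decomp_def using I(1) by blast
qed

lemma decomp_mono: "has_decomp P f p C \<Longrightarrow> P \<subseteq> P' \<Longrightarrow> has_decomp P' f p C"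
  unfolding has_decomp_def by blast

lemma plus_mono:
  assumes "P \<subseteq> P'" shows "plus_closure P \<subseteq> plus_closure P'"
proof
  fix C assume "C \<in> plus_closure P"
  then have h: "hereditary C" and a: "\<forall>p::nat. p > 0 \<longrightarrow> (\<exists>c::real. has_decomp P (\<lambda>_. c) p C)"
    unfolding plus_closure_def by auto
  have "\<forall>p::nat. p > 0 \<longrightarrow> (\<exists>c::real. has_decomp P' (\<lambda>_. c) p C)"
    using a decomp_mono[OF _ assms] by meson
  then show "C \<in> plus_closure P'" using h unfolding plus_closure_def by simp
qed

lemma star_mono:
  assumes "P \<subseteq> P'" shows "star_closure P \<subseteq> star_closure P'"
proof
  fix C assume "C \<in> star_closure P"
  then have h: "hereditary C" and a: "\<forall>p::nat. p > 0 \<longrightarrow> (\<exists>f. mono f \<and> subpoly f \<and> has_decomp P f p C)"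
    unfolding star_closure_def by auto
  have "\<forall>p::nat. p > 0 \<longrightarrow> (\<exists>f. mono f \<and> subpoly f \<and> has_decomp P' f p C)"
    using a decomp_mono[OF _ assms] by meson
  then show "C \<in> star_closure P'" using h unfolding star_closure_def by simp
qed

lemma plus_inter:
  assumes "hered_property P1" "hered_property P2"
  shows "plus_closure (P1 \<inter> P2) = plus_closure P1 \<inter> plus_closure P2"
proof
  show "plus_closure (P1 \<inter> P2) \<subseteq> plus_closure P1 \<inter> plus_closure P2"
    using plus_mono by blast
  show "plus_closure P1 \<inter> plus_closure P2 \<subseteq> plus_closure (P1 \<inter> P2)"
  proof
    fix C assume "C \<in> plus_closure P1 \<inter> plus_closure P2"
    then have h: "hereditary C"
      and a: "\<forall>p::nat. p > 0 \<longrightarrow> (\<exists>c::real. has_decomp P1 (\<lambda>_. c) p C)"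
      and b: "\<forall>p::nat. p > 0 \<longrightarrow> (\<exists>c::real. has_decomp P2 (\<lambda>_. c) p C)"
      unfolding plus_closure_def by auto
    have "\<exists>c::real. has_decomp (P1 \<inter> P2) (\<lambda>_. c) p C" if "p > 0" for p
    proof -
      obtain c1 c2 where "has_decomp P1 (\<lambda>_. c1) p C" "has_decomp P2 (\<lambda>_. c2) p C"
        using a b \<open>p > 0\<close> by blast
      from decomp_inter[OF assms this] show ?thesis by blast
    qed
    then show "C \<in> plus_closure (P1 \<inter> P2)" using h unfolding plus_closure_def by blast
  qed
qed

lemma subpoly_prod:
  assumes "subpoly f1" "subpoly f2"
  shows "subpoly (\<lambda>n. max 0 (f1 n) * max 0 (f2 n))"
proof -
  obtain g1 where g1: "g1 \<longlonglongrightarrow> 0" "\<forall>\<^sub>F n in sequentially. f1 n = real n powr g1 n"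
    using assms(1) unfolding subpoly_def by blast
  obtain g2 where g2: "g2 \<longlonglongrightarrow> 0" "\<forall>\<^sub>F n in sequentially. f2 n = real n powr g2 n"
    using assms(2) unfolding subpoly_def by blast
  have "(\<lambda>n. g1 n + g2 n) \<longlonglongrightarrow> 0" using tendsto_add[OF g1(1) g2(1)] by simp
  moreover have "\<forall>\<^sub>F n in sequentially. max 0 (f1 n) * max 0 (f2 n) = real n powr (g1 n + g2 n)"
    using g1(2) g2(2)
  proof eventually_elim
    case (elim n)
    then show ?case by (simp add: powr_add)
  qed
  ultimately show ?thesis unfolding subpoly_def by blast
qed

lemma mono_prod:
  assumes "mono (f1 :: nat \<Rightarrow> real)" "mono f2"
  shows "mono (\<lambda>n. max 0 (f1 n) * max 0 (f2 n))"
proof (rule monoI)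
  fix x y :: nat assume "x \<le> y"
  then have "f1 x \<le> f1 y" "f2 x \<le> f2 y" using assms by (auto dest: monoD)
  then show "max 0 (f1 x) * max 0 (f2 x) \<le> max 0 (f1 y) * max 0 (f2 y)"
    by (intro mult_mono) auto
qed

lemma star_inter:
  assumes "hered_property P1" "hered_property P2"
  shows "star_closure (P1 \<inter> P2) = star_closure P1 \<inter> star_closure P2"
proof
  show "star_closure (P1 \<inter> P2) \<subseteq> star_closure P1 \<inter> star_closure P2"
    using star_mono by blast
  show "star_closure P1 \<inter> star_closure P2 \<subseteq> star_closure (P1 \<inter> P2)"
  proof
    fix C assume "C \<in> star_closure P1 \<inter> star_closure P2"
    then have h: "hereditary C"
      and a: "\<forall>p::nat. p > 0 \<longrightarrow> (\<exists>f. mono f \<and> subpoly f \<and> has_decomp P1 f p C)"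
      and b: "\<forall>p::nat. p > 0 \<longrightarrow> (\<exists>f. mono f \<and> subpoly f \<and> has_decomp P2 f p C)"
      unfolding star_closure_def by auto
    have "\<exists>f. mono f \<and> subpoly f \<and> has_decomp (P1 \<inter> P2) f p C" if "p > 0" for p
    proof -
      obtain f1 where f1: "mono f1" "subpoly f1" "has_decomp P1 f1 p C"
        using a \<open>p > 0\<close> by blast
      obtain f2 where f2: "mono f2" "subpoly f2" "has_decomp P2 f2 p C"
        using b \<open>p > 0\<close> by blast
      have "mono (\<lambda>n. max 0 (f1 n) * max 0 (f2 n))" by (rule mono_prod[OF f1(1) f2(1)])
      moreover have "subpoly (\<lambda>n. max 0 (f1 n) * max 0 (f2 n))" by (rule subpoly_prod[OF f1(2) f2(2)])
      moreover have "has_decomp (P1 \<inter> P2) (\<lambda>n. max 0 (f1 n) * max 0 (f2 n)) p C"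
        by (rule decomp_inter[OF assms f1(3) f2(3)])
      ultimately show ?thesis by blast
    qed
    then show "C \<in> star_closure (P1 \<inter> P2)" using h unfolding star_closure_def by blast
  qed
qed

theorem mainTheorem10:
  shows "(\<forall>\<Pi>1 \<Pi>2. hered_property \<Pi>1 \<and> hered_property \<Pi>2 \<longrightarrow>
            plus_closure (\<Pi>1 \<inter> \<Pi>2) = plus_closure \<Pi>1 \<inter> plus_closure \<Pi>2
          \<and> star_closure (\<Pi>1 \<inter> \<Pi>2) = star_closure \<Pi>1 \<inter> star_closure \<Pi>2)
       \<and> (\<forall>\<Pi> \<Lambda>1 \<Lambda>2. hered_property \<Pi> \<and> hered_property \<Lambda>1 \<and> hered_property \<Lambda>2 \<longrightarrow>
            (\<Pi> = plus_closure \<Lambda>1 \<and> \<Pi> = plus_closure \<Lambda>2 \<longrightarrow> \<Pi> = plus_closure (\<Lambda>1 \<inter> \<Lambda>2))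
          \<and> (\<Pi> = star_closure \<Lambda>1 \<and> \<Pi> = star_closure \<Lambda>2 \<longrightarrow> \<Pi> = star_closure (\<Lambda>1 \<inter> \<Lambda>2)))"
proof (intro conjI allI impI)
  fix P1 P2 assume "hered_property P1 \<and> hered_property P2"
  then show "plus_closure (P1 \<inter> P2) = plus_closure P1 \<inter> plus_closure P2"
    "star_closure (P1 \<inter> P2) = star_closure P1 \<inter> star_closure P2"
    using plus_inter star_inter by blast+
next
  fix P L1 L2 assume a: "hered_property P \<and> hered_property L1 \<and> hered_property L2"
  {
    assume "P = plus_closure L1 \<and> P = plus_closure L2"
    then show "P = plus_closure (L1 \<inter> L2)" using plus_inter[of L1 L2] a by (metis Int_absorb)
  next
    assume "P = star_closure L1 \<and> P = star_closure L2"
    then show "P = star_closure (L1 \<inter> L2)" using star_inter[of L1 L2] a by (metis Int_absorb)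
  }
qed

end
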